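(* Let $\mathbf{a}\in\mathbb{C}^n$, $\beta>0$ and $f(\mathbf{z})=\frac12|\mathbf{a}^*\mathbf{z}|^2+\frac{\beta}{2}\|\mathbf{z}\|_4^4$ on $\mathbb{CS}^{n-1}$. Suppose $\mathbf{z},\mathbf{y}\in\mathbb{CS}^{n-1}$ are two consistent local minimizers of $f$ on $\mathbb{CS}^{n-1}$ with $\mathbf{a}^*\mathbf{z}\neq0$ and $\mathbf{a}^*\mathbf{y}\neq0$. Then $|y_k|=|z_k|$ for all $k\in[n]$.
   Context: $\mathbb{CS}^{n-1}=\{\mathbf{z}\in\mathbb{C}^n:\|\mathbf{z}\|_2=1\}$. A stationary point $\mathbf{z}$ (i.e. $(\mathbf{a}^*\mathbf{z})\mathbf{a}+2\beta\,\mathrm{diag}(|z_1|^2,\dots,|z_n|^2)\mathbf{z}=2\lambda\mathbf{z}$ with $2\lambda=|\mathbf{a}^*\mathbf{z}|^2+2\beta\|\mathbf{z}\|_4^4$) is called consistent if $\bar a_kz_k\in\mathbb{R}$ for all $k$ with $a_k\neq0$ and $z_k\in\mathbb{R}$ for all $k$ with $a_k=0$. *)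

theory Defs
  imports "HOL-Analysis.Analysis"
begin

definition inner_aH :: "complex ^ 'n \<Rightarrow> complex ^ 'n \<Rightarrow> complex" where
  "inner_aH a z = (\<Sum>k\<in>UNIV. cnj (a $ k) * z $ k)"

definition csphere :: "(complex ^ 'n) set" where
  "csphere = {z. (\<Sum>k\<in>UNIV. (cmod (z $ k))^2) = 1}"

definition norm4_4 :: "complex ^ 'n \<Rightarrow> real" where
  "norm4_4 z = (\<Sum>k\<in>UNIV. (cmod (z $ k))^4)"

definition fobj :: "complex ^ 'n \<Rightarrow> real \<Rightarrow> complex ^ 'n \<Rightarrow> real" where
  "fobj a \<beta> z = (1/2) * (cmod (inner_aH a z))^2 + (\<beta>/2) * norm4_4 z"

definition local_min_on_sphere :: "complex ^ 'n \<Rightarrow> real \<Rightarrow> complex ^ 'n \<Rightarrow> bool" where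
  "local_min_on_sphere a \<beta> z \<longleftrightarrow> z \<in> csphere \<and>
     (\<exists>e>0. \<forall>w\<in>csphere. dist w z < e \<longrightarrow> fobj a \<beta> z \<le> fobj a \<beta> w)"

definition stationary :: "complex ^ 'n \<Rightarrow> real \<Rightarrow> complex ^ 'n \<Rightarrow> bool" where
  "stationary a \<beta> z \<longleftrightarrow> z \<in> csphere \<and>
     (\<forall>k. inner_aH a z * a $ k + 2 * complex_of_real \<beta> * complex_of_real ((cmod (z $ k))^2) * z $ k
          = complex_of_real ((cmod (inner_aH a z))^2 + 2 * \<beta> * norm4_4 z) * z $ k)"

definition consistent :: "complex ^ 'n \<Rightarrow> real \<Rightarrow> complex ^ 'n \<Rightarrow> bool" where
  "consistent a \<beta> z \<longleftrightarrow> stationary a \<beta> z \<and>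
     (\<forall>k. (a $ k \<noteq> 0 \<longrightarrow> cnj (a $ k) * z $ k \<in> \<real>) \<and> (a $ k = 0 \<longrightarrow> z $ k \<in> \<real>))"

end

theory Submission
  imports Defs
begin


definition sg :: "'n \<Rightarrow> 'n \<Rightarrow> real" where
  "sg k0 k = (if k = k0 then 1 else -1)"

definition prof :: "('n::finite \<Rightarrow> real) \<Rightarrow> real \<Rightarrow> 'n \<Rightarrow> ('n \<Rightarrow> real) \<Rightarrow> real \<Rightarrow> real \<Rightarrow> bool" where
  "prof r \<beta> k0 P m s \<longleftrightarrow> s > 0 \<and> r k0 > 0 \<and> (\<forall>k. r k \<ge> 0) \<and> (\<forall>k. P k > 0) \<and>
     (\<forall>k. s * sg k0 k * r k = P k * (m - (P k)^2)) \<and>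
     ((\<Sum>k\<in>UNIV. sg k0 k * r k * P k) = 2 * \<beta> * s) \<and> ((\<Sum>k\<in>UNIV. (P k)^2) = 1)"

lemma prof_eqs:
  assumes "prof r \<beta> k0 P m s"
  shows "s * r k0 = P k0 * (m - (P k0)^2)" "\<And>k. k \<noteq> k0 \<Longrightarrow> s * r k = P k * ((P k)^2 - m)"
    "s > 0" "r k0 > 0" "\<And>k. r k \<ge> 0" "\<And>k. P k > 0"
proof -
  have h: "\<And>k. s * sg k0 k * r k = P k * (m - (P k)^2)" using assms unfolding prof_def by blast
  show "s * r k0 = P k0 * (m - (P k0)^2)" using h[of k0] by (simp add: sg_def)
  fix k assume "k \<noteq> k0"
  then show "s * r k = P k * ((P k)^2 - m)" using h[of k] by (simp add: sg_def algebra_simps)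
next
  show "s > 0" "r k0 > 0" "\<And>k. r k \<ge> 0" "\<And>k. P k > 0" using assms unfolding prof_def by blast+
qed

lemma prof_basic:
  assumes "prof r \<beta> k0 P m s"
  shows "(P k0)^2 < m" "\<And>k. k \<noteq> k0 \<Longrightarrow> (P k)^2 \<ge> m" "\<And>k. k \<noteq> k0 \<Longrightarrow> P k > P k0"
proof -
  note e = prof_eqs[OF assms]
  have "s * r k0 > 0" using e(3,4) by simp
  then have "P k0 * (m - (P k0)^2) > 0" using e(1) by simp
  then show a: "(P k0)^2 < m" using e(6)[of k0] by (simp add: zero_less_mult_iff)
  fix k assume k: "k \<noteq> k0"
  have "s * r k \<ge> 0" using e(3) e(5)[of k] by simp
  then have "P k * ((P k)^2 - m) \<ge> 0" using e(2)[OF k] by simp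
  then show b: "(P k)^2 \<ge> m" using e(6)[of k] by (simp add: zero_le_mult_iff)
  have "(P k0)^2 < (P k)^2" using a b by simp
  then show "P k > P k0" using e(6)[of k] by (simp add: power_less_imp_less_base)
qed

lemma prof_cross:
  assumes "prof r \<beta> k0 P m s" "prof r \<beta> k0 Q m' s'"
  shows "(\<Sum>k\<in>UNIV. P k * Q k * (m - (P k)^2)) = 2 * \<beta> * s * s'"
proof -
  have h: "\<And>k. s * sg k0 k * r k = P k * (m - (P k)^2)" using assms(1) unfolding prof_def by blast
  have h2: "(\<Sum>k\<in>UNIV. sg k0 k * r k * Q k) = 2 * \<beta> * s'" using assms(2) unfolding prof_def by blast
  have "(\<Sum>k\<in>UNIV. P k * Q k * (m - (P k)^2)) = (\<Sum>k\<in>UNIV. Q k * (s * sg k0 k * r k))"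
    by (rule sum.cong) (simp_all add: h)
  also have "\<dots> = s * (\<Sum>k\<in>UNIV. sg k0 k * r k * Q k)"
    by (simp add: sum_distrib_left mult.commute mult.left_commute)
  also have "\<dots> = 2 * \<beta> * s * s'" using h2 by simp
  finally show ?thesis .
qed

lemma prof_caseC:
  fixes P Q :: "'n::finite \<Rightarrow> real"
  assumes "prof r \<beta> k0 P m s" "prof r \<beta> k0 Q m' s'" "m < m'" "s' < s"
  shows False
proof -
  note eP = prof_eqs[OF assms(1)] and eQ = prof_eqs[OF assms(2)]
  define E where "E (k::'n) = (m' - m) - ((Q k)^2 - (P k)^2)" for k
  define q where "q (k::'n) = P k * Q k" for k
  have Pp: "\<And>k. P k > 0" and Qp: "\<And>k. Q k > 0" using eP(6) eQ(6) by auto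
  have Ek: "E k \<ge> 0" if k: "k \<noteq> k0" for k
  proof (rule ccontr)
    assume "\<not> E k \<ge> 0"
    then have lt: "(Q k)^2 - m' > (P k)^2 - m" unfolding E_def by simp
    have pm: "(P k)^2 \<ge> m" using prof_basic(2)[OF assms(1) k] .
    have "(Q k)^2 > (P k)^2" using lt assms(3) by simp
    then have QP: "Q k > P k" using Qp[of k] by (simp add: power_less_imp_less_base)
    have A: "Q k * ((Q k)^2 - m') > P k * ((Q k)^2 - m')"
      using QP lt pm by (intro mult_strict_right_mono) auto
    have B: "P k * ((Q k)^2 - m') \<ge> P k * ((P k)^2 - m)"
      using lt Pp[of k] by (intro mult_left_mono) auto
    have C: "s' * r k \<le> s * r k" using assms(4) eP(5)[of k] by (intro mult_right_mono) auto
    show False using A B C eP(2)[OF k] eQ(2)[OF k] by linarith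
  qed
  have qk: "q k \<ge> q k0" if k: "k \<noteq> k0" for k
  proof -
    have "P k0 \<le> P k" "Q k0 \<le> Q k" using prof_basic(3)[OF assms(1) k] prof_basic(3)[OF assms(2) k] by auto
    then show ?thesis unfolding q_def using Pp[of k0] Qp[of k0] by (intro mult_mono) auto
  qed
  have sumqE: "(\<Sum>k\<in>UNIV. q k * E k) = 0"
  proof -
    have "(\<Sum>k\<in>UNIV. q k * E k) = (\<Sum>k\<in>UNIV. Q k * P k * (m' - (Q k)^2) - P k * Q k * (m - (P k)^2))"
      unfolding q_def E_def by (rule sum.cong) (simp_all add: algebra_simps)
    also have "\<dots> = (\<Sum>k\<in>UNIV. Q k * P k * (m' - (Q k)^2)) - (\<Sum>k\<in>UNIV. P k * Q k * (m - (P k)^2))"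
      by (simp add: sum_subtractf)
    also have "\<dots> = 0"
      using prof_cross[OF assms(1,2)] prof_cross[OF assms(2,1)] by simp
    finally show ?thesis .
  qed
  have sumE: "(\<Sum>k\<in>UNIV. E k) = real CARD('n) * (m' - m)"
  proof -
    have "(\<Sum>k\<in>UNIV. E k) = (\<Sum>k\<in>(UNIV::'n set). (m' - m)) - ((\<Sum>k\<in>UNIV. (Q k)^2) - (\<Sum>k\<in>UNIV. (P k)^2))"
      unfolding E_def by (simp add: sum_subtractf)
    moreover have "(\<Sum>k\<in>UNIV. (Q k)^2) = 1" "(\<Sum>k\<in>UNIV. (P k)^2) = 1"
      using assms(1,2) unfolding prof_def by blast+
    ultimately show ?thesis by simp
  qed
  have "(\<Sum>k\<in>UNIV. q k0 * E k) \<le> (\<Sum>k\<in>UNIV. q k * E k)"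
  proof (rule sum_mono)
    fix k :: 'n
    show "q k0 * E k \<le> q k * E k"
    proof (cases "k = k0")
      case False
      then show ?thesis using qk[OF False] Ek[OF False] by (intro mult_right_mono) auto
    qed simp
  qed
  moreover have "(\<Sum>k\<in>UNIV. q k0 * E k) = q k0 * (real CARD('n) * (m' - m))"
    by (simp add: sum_distrib_left[symmetric] sumE)
  moreover have "q k0 * (real CARD('n) * (m' - m)) > 0"
    unfolding q_def using Pp[of k0] Qp[of k0] assms(3) by simp
  ultimately show False using sumqE by linarith
qed

lemma prof_caseA:
  fixes P Q :: "'n::finite \<Rightarrow> real"
  assumes "prof r \<beta> k0 P m s" "prof r \<beta> k0 Q m' s'" "m \<le> m'" "s \<le> s'" "\<beta> > 0"
  shows "P k = Q k"
proof -
  note eP = prof_eqs[OF assms(1)] and eQ = prof_eqs[OF assms(2)]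
  have SP: "(\<Sum>j\<in>UNIV. (P j)^2) = 1" and SQ: "(\<Sum>j\<in>UNIV. (Q j)^2) = 1"
    using assms(1,2) unfolding prof_def by blast+
  have S0: "(\<Sum>j\<in>UNIV. (Q j)^2 - (P j)^2) = 0" by (simp only: sum_subtractf SP SQ diff_self)
  have Pp: "\<And>k. P k > 0" and Qp: "\<And>k. Q k > 0" using eP(6) eQ(6) by auto
  have ge: "Q k \<ge> P k" if k: "k \<noteq> k0" for k
  proof (rule ccontr)
    assume "\<not> Q k \<ge> P k"
    then have QP: "Q k < P k" by simp
    have qm: "(Q k)^2 \<ge> m'" using prof_basic(2)[OF assms(2) k] .
    have pm: "(P k)^2 \<ge> m" using prof_basic(2)[OF assms(1) k] .
    have "(Q k)^2 < (P k)^2" using QP Qp[of k] by (simp add: power_strict_mono)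
    then have lt: "(Q k)^2 - m' < (P k)^2 - m" using assms(3) by simp
    have A: "Q k * ((Q k)^2 - m') < Q k * ((P k)^2 - m)"
      using lt Qp[of k] by (intro mult_strict_left_mono) auto
    have B: "Q k * ((P k)^2 - m) \<le> P k * ((P k)^2 - m)"
      using QP pm by (intro mult_right_mono) auto
    have C: "s * r k \<le> s' * r k" using assms(4) eP(5)[of k] by (intro mult_right_mono) auto
    show False using A B C eP(2)[OF k] eQ(2)[OF k] by linarith
  qed
  have termle: "sg k0 j * r j * (Q j - P j) \<le> 0" if "Q k0 \<le> P k0" for j
  proof (cases "j = k0")
    case True
    then show ?thesis using that eP(4) by (simp add: sg_def mult_nonneg_nonpos)
  next
    case False
    then show ?thesis using ge[OF False] eP(5)[of j] by (simp add: sg_def)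
  qed
  have sq: "(Q k0)^2 \<le> (P k0)^2"
  proof -
    note S0
    moreover have "(\<Sum>j\<in>UNIV. (Q j)^2 - (P j)^2) = ((Q k0)^2 - (P k0)^2) + (\<Sum>j\<in>UNIV-{k0}. (Q j)^2 - (P j)^2)"
      by (rule sum.remove) simp_all
    moreover have "(\<Sum>j\<in>UNIV-{k0}. (Q j)^2 - (P j)^2) \<ge> 0"
    proof (rule sum_nonneg)
      fix j assume "j \<in> UNIV - {k0}"
      then have "P j \<le> Q j" "0 \<le> P j" using ge Pp[of j] by auto
      then show "0 \<le> (Q j)^2 - (P j)^2" by (simp add: power_mono)
    qed
    ultimately show ?thesis by linarith
  qed
  have Q0: "Q k0 \<le> P k0" using power2_le_imp_le[OF sq] Pp[of k0] by simp
  have sumdiff: "(\<Sum>j\<in>UNIV. sg k0 j * r j * (Q j - P j)) = 2 * \<beta> * (s' - s)"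
  proof -
    have "(\<Sum>j\<in>UNIV. sg k0 j * r j * (Q j - P j)) = (\<Sum>j\<in>UNIV. sg k0 j * r j * Q j) - (\<Sum>j\<in>UNIV. sg k0 j * r j * P j)"
    proof -
      have "(\<Sum>j\<in>UNIV. sg k0 j * r j * (Q j - P j)) = (\<Sum>j\<in>UNIV. sg k0 j * r j * Q j - sg k0 j * r j * P j)"
        by (rule sum.cong) (simp_all add: right_diff_distrib)
      then show ?thesis by (simp only: sum_subtractf)
    qed
    moreover have "(\<Sum>j\<in>UNIV. sg k0 j * r j * Q j) = 2 * \<beta> * s'" "(\<Sum>j\<in>UNIV. sg k0 j * r j * P j) = 2 * \<beta> * s"
      using assms(1,2) unfolding prof_def by blast+
    ultimately show ?thesis by (simp add: right_diff_distrib)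
  qed
  have "(\<Sum>j\<in>UNIV. sg k0 j * r j * (Q j - P j)) \<le> 0" using termle[OF Q0] by (intro sum_nonpos) auto
  moreover have "2 * \<beta> * (s' - s) \<ge> 0" using assms(4,5) by simp
  ultimately have "(\<Sum>j\<in>UNIV. sg k0 j * r j * (Q j - P j)) = 0" using sumdiff by linarith
  then have "(\<Sum>j\<in>UNIV. -(sg k0 j * r j * (Q j - P j))) = 0" by (simp add: sum_negf)
  then have "\<forall>j\<in>UNIV. -(sg k0 j * r j * (Q j - P j)) = 0"
    using termle[OF Q0] sum_nonneg_eq_0_iff[of UNIV "\<lambda>j. -(sg k0 j * r j * (Q j - P j))"] by simp
  then have "-(sg k0 k0 * r k0 * (Q k0 - P k0)) = 0" by blast
  then have "r k0 * (Q k0 - P k0) = 0" by (simp add: sg_def)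
  then have P0: "Q k0 = P k0" using eP(4) by simp
  note S0
  moreover have "\<forall>j\<in>UNIV. (Q j)^2 - (P j)^2 \<ge> 0"
  proof
    fix j :: 'n
    show "(Q j)^2 - (P j)^2 \<ge> 0"
    proof (cases "j = k0")
      case True then show ?thesis using P0 by simp
    next
      case False
      then have "P j \<le> Q j" "0 \<le> P j" using ge Pp[of j] by auto
      then show ?thesis by (simp add: power_mono)
    qed
  qed
  ultimately have "\<forall>j\<in>UNIV. (Q j)^2 - (P j)^2 = 0"
    using sum_nonneg_eq_0_iff[of UNIV "\<lambda>j. (Q j)^2 - (P j)^2"] by simp
  then have "(Q k)^2 = (P k)^2" by simp
  then show "P k = Q k" using Pp[of k] Qp[of k] by (simp add: power2_eq_iff_nonneg)
qed

lemma prof_k0_max: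
  assumes "prof r \<beta> k0 P m s" "\<beta> > 0" "k \<noteq> k0"
  shows "r k < r k0"
proof (rule ccontr)
  assume "\<not> r k < r k0"
  then have rk: "r k \<ge> r k0" by simp
  note eP = prof_eqs[OF assms(1)]
  have "P k > P k0" using prof_basic(3)[OF assms(1,3)] .
  then have lt: "r k0 * P k0 < r k * P k" using rk eP(4) eP(6)[of k0] by (intro mult_le_less_imp_less) auto
  define g where "g j = (if j = k0 then r k0 * P k0 else 0) + (if j = k then - (r k * P k) else 0)" for j
  have "(\<Sum>j\<in>UNIV. sg k0 j * r j * P j) \<le> (\<Sum>j\<in>UNIV. g j)"
  proof (rule sum_mono)
    fix j
    show "sg k0 j * r j * P j \<le> g j"
      using assms(3) eP(5)[of j] eP(6)[of j] by (auto simp: g_def sg_def)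
  qed
  also have "(\<Sum>j\<in>UNIV. g j) = r k0 * P k0 - r k * P k"
    unfolding g_def by (simp add: sum.distrib)
  finally have "(\<Sum>j\<in>UNIV. sg k0 j * r j * P j) < 0" using lt by linarith
  moreover have "(\<Sum>j\<in>UNIV. sg k0 j * r j * P j) = 2 * \<beta> * s" using assms(1) unfolding prof_def by blast
  moreover have "\<beta> * s > 0" using eP(3) assms(2) by simp
  ultimately show False by linarith
qed

lemma prof_unique:
  fixes P Q :: "'n::finite \<Rightarrow> real"
  assumes "prof r \<beta> k0 P m s" "prof r \<beta> k1 Q m' s'" "\<beta> > 0"
  shows "P k = Q k"
proof -
  have "k1 = k0"
  proof (rule ccontr)
    assume "k1 \<noteq> k0"
    then show False using prof_k0_max[OF assms(1,3)] prof_k0_max[OF assms(2,3)] by force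
  qed
  then have Q: "prof r \<beta> k0 Q m' s'" using assms(2) by simp
  consider "m \<le> m'" "s \<le> s'" | "m' \<le> m" "s' \<le> s" | "m < m'" "s' < s" | "m' < m" "s < s'"
    by linarith
  then show ?thesis
  proof cases
    case 1 then show ?thesis using prof_caseA[OF assms(1) Q _ _ assms(3)] by blast
  next
    case 2 then show ?thesis using prof_caseA[OF Q assms(1) _ _ assms(3)] by metis
  next
    case 3 then show ?thesis using prof_caseC[OF assms(1) Q] by blast
  next
    case 4 then show ?thesis using prof_caseC[OF Q assms(1)] by blast
  qed
qed



lemma dist_vec_eq: "dist (w::complex^'n) z = sqrt (\<Sum>i\<in>UNIV. (cmod (w$i - z$i))^2)"
  by (simp add: dist_norm norm_vec_def L2_set_def)

lemma no_zero_coord: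
  assumes "\<beta> > 0" "local_min_on_sphere a \<beta> z" "inner_aH a z \<noteq> 0" "z$k = 0" "a$k = 0"
  shows False
proof -
  obtain e where e: "e>0" "\<forall>w\<in>csphere. dist w z < e \<longrightarrow> fobj a \<beta> z \<le> fobj a \<beta> w"
    and zs: "z \<in> csphere" using assms(2) unfolding local_min_on_sphere_def by blast
  define C where "C = (cmod (inner_aH a z))^2"
  define N where "N = norm4_4 z"
  have C: "C > 0" using assms(3) by (simp add: C_def)
  have N: "N \<ge> 0" unfolding N_def norm4_4_def by (simp add: sum_nonneg)
  define S where "S = min (1/2) (min (e^2/4) (C / (2*\<beta>*(N+1))))"
  have S: "S > 0" "S \<le> 1/2" "S \<le> e^2/4" "S \<le> C/(2*\<beta>*(N+1))"
  proof -
    show "S > 0" using e(1) C N assms(1) unfolding S_def by auto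
    show "S \<le> 1/2" unfolding S_def by (rule min.cobounded1)
    show "S \<le> e^2/4" unfolding S_def by (meson min.cobounded1 min.coboundedI2)
    show "S \<le> C/(2*\<beta>*(N+1))" unfolding S_def by (meson min.cobounded2 min.coboundedI2)
  qed
  define w where "w = (\<chi> i. complex_of_real (sqrt (1-S)) * z$i + (if i = k then complex_of_real (sqrt S) else 0))"
  have sq1: "(sqrt (1-S))^2 = 1 - S" using S by simp
  have sq2: "(sqrt S)^2 = S" using S by simp
  have w1: "(cmod (w$i))^2 = (1-S) * (cmod (z$i))^2 + (if i = k then S else 0)" for i
  proof (cases "i = k")
    case True
    then show ?thesis using assms(4) sq2 S by (simp add: w_def)
  next
    case False
    then have "cmod (w$i) = sqrt (1-S) * cmod (z$i)" using S by (simp add: w_def norm_mult)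
    then show ?thesis using False sq1 by (simp add: power_mult_distrib)
  qed
  have w4: "(cmod (w$i))^4 = (1-S)^2 * (cmod (z$i))^4 + (if i = k then S^2 else 0)" for i
  proof -
    have "(cmod (w$i))^4 = ((cmod (w$i))^2)^2" by simp
    also have "\<dots> = (1-S)^2 * (cmod (z$i))^4 + (if i = k then S^2 else 0)"
      using assms(4) by (cases "i = k") (simp_all add: w1 power_mult_distrib flip: power_mult)
    finally show ?thesis .
  qed
  have wi: "cnj (a$i) * w$i = complex_of_real (sqrt (1-S)) * (cnj (a$i) * z$i)" for i
    using assms(5) by (cases "i = k") (simp_all add: w_def algebra_simps)
  have wd: "(cmod (w$i - z$i))^2 = (1 - sqrt (1-S))^2 * (cmod (z$i))^2 + (if i = k then S else 0)" for i
  proof (cases "i = k")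
    case True
    then show ?thesis using assms(4) sq2 S by (simp add: w_def)
  next
    case False
    then have "w$i - z$i = complex_of_real (sqrt (1-S) - 1) * z$i" by (simp add: w_def algebra_simps)
    then have "cmod (w$i - z$i) = cmod (complex_of_real (sqrt (1-S) - 1)) * cmod (z$i)" by (simp only: norm_mult)
    also have "cmod (complex_of_real (sqrt (1-S) - 1)) = \<bar>sqrt (1-S) - 1\<bar>" by (rule norm_of_real)
    finally have "cmod (w$i - z$i) = \<bar>sqrt (1-S) - 1\<bar> * cmod (z$i)" .
    then show ?thesis using False by (simp add: power_mult_distrib power2_commute)
  qed
  have zsum: "(\<Sum>i\<in>UNIV. (cmod (z$i))^2) = 1" using zs unfolding csphere_def by simp
  have wsph: "w \<in> csphere"
  proof -
    have "(\<Sum>i\<in>UNIV. (cmod (w$i))^2) = (1-S) * (\<Sum>i\<in>UNIV. (cmod (z$i))^2) + S"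
      by (simp add: w1 sum.distrib sum_distrib_left)
    then show ?thesis unfolding csphere_def using zsum by simp
  qed
  have winner: "inner_aH a w = complex_of_real (sqrt (1-S)) * inner_aH a z"
    unfolding inner_aH_def by (simp add: wi sum_distrib_left)
  have wC: "(cmod (inner_aH a w))^2 = (1-S) * C"
    unfolding winner C_def using S sq1 by (simp add: norm_mult power_mult_distrib)
  have wN: "norm4_4 w = (1-S)^2 * N + S^2"
    unfolding norm4_4_def N_def by (simp add: w4 sum.distrib sum_distrib_left)
  have wdist: "dist w z < e"
  proof -
    have r0: "0 \<le> 1 - sqrt (1-S)" "1 - sqrt (1-S) \<le> S"
    proof -
      show "0 \<le> 1 - sqrt (1-S)" using S by simp
      have "1 - S \<le> sqrt (1-S)" using S by (intro real_le_rsqrt) (simp add: power2_eq_square mult_le_cancel_left1)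
      then show "1 - sqrt (1-S) \<le> S" by simp
    qed
    have "(1 - sqrt (1-S))^2 \<le> S^2" using r0 by (intro power_mono) auto
    also have "\<dots> \<le> S" using S by (simp add: power2_eq_square mult_le_cancel_left1)
    finally have rs: "(1 - sqrt (1-S))^2 \<le> S" .
    have "(\<Sum>i\<in>UNIV. (cmod (w$i - z$i))^2) = (1 - sqrt (1-S))^2 * (\<Sum>i\<in>UNIV. (cmod (z$i))^2) + S"
      by (simp add: wd sum.distrib sum_distrib_left)
    also have "\<dots> \<le> 2 * S" using zsum rs by simp
    also have "\<dots> < e^2" using S e(1) by simp
    finally have "sqrt (\<Sum>i\<in>UNIV. (cmod (w$i - z$i))^2) < sqrt (e^2)" by (intro real_sqrt_less_mono)
    then show ?thesis unfolding dist_vec_eq using e(1) by simp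
  qed
  have "fobj a \<beta> w < fobj a \<beta> z"
  proof -
    have "fobj a \<beta> w - fobj a \<beta> z = S * (\<beta> * S * (N+1) / 2 - C/2 - \<beta> * N)"
      unfolding fobj_def wC wN C_def[symmetric] N_def[symmetric] by (simp add: algebra_simps power2_eq_square add_divide_distrib diff_divide_distrib)
    moreover have "\<beta> * S * (N+1) \<le> C / 2"
    proof -
      have D: "2*\<beta>*(N+1) > 0" using assms(1) N by simp
      have "S * (2*\<beta>*(N+1)) \<le> C" using S(4) D by (simp add: pos_le_divide_eq)
      then show ?thesis by (simp add: algebra_simps)
    qed
    then have "\<beta> * S * (N+1) / 2 - C/2 - \<beta> * N < 0" using C N assms(1) mult_nonneg_nonneg[of \<beta> N] by linarith
    then have "S * (\<beta> * S * (N+1) / 2 - C/2 - \<beta> * N) < 0" using S(1) by (simp add: mult_pos_neg)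
    ultimately show ?thesis by linarith
  qed
  moreover have "fobj a \<beta> z \<le> fobj a \<beta> w" using e(2) wsph wdist by blast
  ultimately show False by simp
qed



lemma unit_aux:
  fixes x :: real
  assumes "0 < x^2" "x^2 \<le> 1"
  shows "sqrt (1 - x^2) < 1" "1 - sqrt (1 - x^2) \<le> x^2" "0 \<le> 1 - sqrt (1 - x^2)"
    "(sqrt (1 - x^2))^2 + x^2 = 1"
proof -
  show "sqrt (1 - x^2) < 1" using assms by simp
  then show "0 \<le> 1 - sqrt (1 - x^2)" by simp
  have y: "0 \<le> 1 - x^2" "1 - x^2 \<le> 1" using assms by auto
  have "(1 - x^2)^2 \<le> 1 - x^2" using mult_left_le[OF y(2) y(1)] by (simp add: power2_eq_square)
  then have "1 - x^2 \<le> sqrt (1 - x^2)" by (intro real_le_rsqrt)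
  then show "1 - sqrt (1 - x^2) \<le> x^2" by simp
  show "(sqrt (1 - x^2))^2 + x^2 = 1" using assms by simp
qed

lemma two_pos:
  assumes "\<beta> > 0" "local_min_on_sphere a \<beta> z" "inner_aH a z = complex_of_real c0" "c0 > 0"
    "cnj (a$i) * z$i = complex_of_real ti" "cnj (a$j) * z$j = complex_of_real tj"
    "ti > 0" "tj > 0" "i \<noteq> j"
  shows False
proof -
  obtain e where e: "e>0" "\<forall>w\<in>csphere. dist w z < e \<longrightarrow> fobj a \<beta> z \<le> fobj a \<beta> w"
    and zs: "z \<in> csphere" using assms(2) unfolding local_min_on_sphere_def by blast
  define K where "K = 1 + ti^2 + tj^2 + tj^2*ti + ti^2*tj"
  have K: "K > 0" "ti^2 \<le> K" "tj^2 \<le> K" "tj^2*ti + ti^2*tj \<le> K" "ti^2 + tj^2 \<le> K"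
    using assms(7,8) unfolding K_def by (auto simp: add_pos_nonneg)
  define H0 where "H0 = min 1 (min c0 (e^2/4))"
  have H0: "H0 > 0" "H0 \<le> 1" "H0 \<le> c0" "H0 \<le> e^2/4"
  proof -
    show "H0 > 0" using e(1) assms(4) unfolding H0_def by auto
    show "H0 \<le> 1" unfolding H0_def by (rule min.cobounded1)
    show "H0 \<le> c0" unfolding H0_def by (meson min.cobounded1 min.coboundedI2)
    show "H0 \<le> e^2/4" unfolding H0_def by (meson min.cobounded2 min.coboundedI2)
  qed
  define H where "H = H0 / K"
  have H: "H > 0" "H * K = H0" using H0 K unfolding H_def by auto
  define \<eta> where "\<eta> = sqrt H"
  have eta2: "\<eta>^2 = H" using H unfolding \<eta>_def by simp
  define x1 where "x1 = \<eta> * tj"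
  define x2 where "x2 = \<eta> * ti"
  have x1sq: "x1^2 = H * tj^2" and x2sq: "x2^2 = H * ti^2"
    unfolding x1_def x2_def by (simp_all add: power_mult_distrib eta2)
  have x1p: "0 < x1^2" "x1^2 \<le> 1"
  proof -
    show "0 < x1^2" using H assms(8) x1sq by simp
    have "H * tj^2 \<le> H * K" using K H by (intro mult_left_mono) auto
    then show "x1^2 \<le> 1" using x1sq H H0 by simp
  qed
  have x2p: "0 < x2^2" "x2^2 \<le> 1"
  proof -
    show "0 < x2^2" using H assms(7) x2sq by simp
    have "H * ti^2 \<le> H * K" using K H by (intro mult_left_mono) auto
    then show "x2^2 \<le> 1" using x2sq H H0 by simp
  qed
  define \<xi>1 where "\<xi>1 = sqrt (1 - x1^2)"
  define \<xi>2 where "\<xi>2 = sqrt (1 - x2^2)"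
  note u1 = unit_aux[OF x1p, folded \<xi>1_def]
  note u2 = unit_aux[OF x2p, folded \<xi>2_def]
  define \<omega>1 where "\<omega>1 = Complex \<xi>1 x1"
  define \<omega>2 where "\<omega>2 = Complex \<xi>2 (- x2)"
  define g where "g k = (if k = i then \<omega>1 else if k = j then \<omega>2 else 1)" for k
  have gn: "cmod (g k) = 1" for k
    unfolding g_def \<omega>1_def \<omega>2_def using u1(4) u2(4) by (auto simp: norm_complex_def)
  define w where "w = (\<chi> k. g k * z$k)"
  have wn: "cmod (w$k) = cmod (z$k)" for k unfolding w_def by (simp add: norm_mult gn)
  have wsph: "w \<in> csphere" using zs unfolding csphere_def by (simp add: wn)
  have wN: "norm4_4 w = norm4_4 z" unfolding norm4_4_def by (simp add: wn)
  define t where "t k = cnj (a$k) * z$k" for k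
  have pw: "g k * t k = t k + ((if k = i then (\<omega>1 - 1) * complex_of_real ti else 0)
      + (if k = j then (\<omega>2 - 1) * complex_of_real tj else 0))" for k
    using assms(5,6,9) unfolding g_def t_def by (auto simp: algebra_simps)
  define c1 where "c1 = c0 - (1 - \<xi>1) * ti - (1 - \<xi>2) * tj"
  have winner: "inner_aH a w = complex_of_real c1"
  proof -
    have "inner_aH a w = (\<Sum>k\<in>UNIV. g k * t k)"
      unfolding inner_aH_def w_def t_def by (simp add: algebra_simps)
    also have "\<dots> = (\<Sum>k\<in>UNIV. t k) + ((\<omega>1 - 1) * complex_of_real ti + (\<omega>2 - 1) * complex_of_real tj)"
      by (simp add: pw sum.distrib)
    also have "(\<Sum>k\<in>UNIV. t k) = complex_of_real c0" using assms(3) unfolding inner_aH_def t_def by simp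
    also have "(\<omega>1 - 1) * complex_of_real ti + (\<omega>2 - 1) * complex_of_real tj
        = complex_of_real ((\<xi>1 - 1) * ti + (\<xi>2 - 1) * tj)"
      unfolding \<omega>1_def \<omega>2_def x1_def x2_def by (simp add: complex_eq_iff algebra_simps)
    finally show ?thesis unfolding c1_def by (simp add: algebra_simps)
  qed
  have c1lt: "c1 < c0"
  proof -
    have "(1 - \<xi>1) * ti > 0" "(1 - \<xi>2) * tj > 0" using u1(1) u2(1) assms(7,8) by simp_all
    then show ?thesis unfolding c1_def by linarith
  qed
  have c1gt: "- c0 < c1"
  proof -
    have "(1 - \<xi>1) * ti \<le> x1^2 * ti" using u1(2) assms(7) by (intro mult_right_mono) auto
    moreover have "(1 - \<xi>2) * tj \<le> x2^2 * tj" using u2(2) assms(8) by (intro mult_right_mono) auto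
    moreover have "x1^2 * ti + x2^2 * tj = H * (tj^2*ti + ti^2*tj)" unfolding x1sq x2sq by (simp add: algebra_simps)
    moreover have "H * (tj^2*ti + ti^2*tj) \<le> H * K" using K H by (intro mult_left_mono) auto
    ultimately show ?thesis unfolding c1_def using H H0 assms(4) by linarith
  qed
  have "(c0 - c1) * (c0 + c1) > 0" using c1lt c1gt by simp
  then have "c1^2 < c0^2" by (simp add: algebra_simps power2_eq_square)
  then have flt: "fobj a \<beta> w < fobj a \<beta> z"
    unfolding fobj_def winner assms(3) wN by simp
  have wdist: "dist w z < e"
  proof -
    have zle: "(cmod (z$k))^2 \<le> 1" for k
    proof -
      have "(cmod (z$k))^2 \<le> (\<Sum>i\<in>UNIV. (cmod (z$i))^2)" by (rule member_le_sum) auto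
      then show ?thesis using zs unfolding csphere_def by simp
    qed
    have dk: "(cmod (w$k - z$k))^2 \<le> (if k = i then (cmod (\<omega>1 - 1))^2 else 0) + (if k = j then (cmod (\<omega>2 - 1))^2 else 0)" for k
    proof -
      have "w$k - z$k = (g k - 1) * z$k" unfolding w_def by (simp add: algebra_simps)
      then have "(cmod (w$k - z$k))^2 = (cmod (g k - 1))^2 * (cmod (z$k))^2" by (simp add: norm_mult power_mult_distrib)
      also have "\<dots> \<le> (cmod (g k - 1))^2" using zle[of k] by (simp add: mult_left_le)
      also have "\<dots> = (if k = i then (cmod (\<omega>1 - 1))^2 else 0) + (if k = j then (cmod (\<omega>2 - 1))^2 else 0)"
        unfolding g_def using assms(9) by auto
      finally show ?thesis .
    qed
    have o1: "(cmod (\<omega>1 - 1))^2 \<le> 2 * x1^2"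
    proof -
      have "(cmod (\<omega>1 - 1))^2 = (1 - \<xi>1)^2 + x1^2" unfolding \<omega>1_def by (simp add: norm_complex_def power2_commute)
      moreover have "(1 - \<xi>1)^2 \<le> x1^2"
      proof -
        have "1 - \<xi>1 \<le> 1" unfolding \<xi>1_def using x1p by simp
        then have "(1 - \<xi>1)^2 \<le> 1 - \<xi>1" using mult_left_le[of "1 - \<xi>1" "1 - \<xi>1"] u1(3) by (simp add: power2_eq_square)
        then show ?thesis using u1(2) by linarith
      qed
      ultimately show ?thesis by simp
    qed
    have o2: "(cmod (\<omega>2 - 1))^2 \<le> 2 * x2^2"
    proof -
      have "(cmod (\<omega>2 - 1))^2 = (1 - \<xi>2)^2 + x2^2" unfolding \<omega>2_def by (simp add: norm_complex_def power2_commute)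
      moreover have "(1 - \<xi>2)^2 \<le> x2^2"
      proof -
        have "1 - \<xi>2 \<le> 1" unfolding \<xi>2_def using x2p by simp
        then have "(1 - \<xi>2)^2 \<le> 1 - \<xi>2" using mult_left_le[of "1 - \<xi>2" "1 - \<xi>2"] u2(3) by (simp add: power2_eq_square)
        then show ?thesis using u2(2) by linarith
      qed
      ultimately show ?thesis by simp
    qed
    have "(\<Sum>k\<in>UNIV. (cmod (w$k - z$k))^2) \<le> (\<Sum>k\<in>UNIV. (if k = i then (cmod (\<omega>1 - 1))^2 else 0) + (if k = j then (cmod (\<omega>2 - 1))^2 else 0))"
      by (rule sum_mono) (rule dk)
    also have "\<dots> = (cmod (\<omega>1 - 1))^2 + (cmod (\<omega>2 - 1))^2" by (simp add: sum.distrib)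
    also have "\<dots> \<le> 2 * (x1^2 + x2^2)" using o1 o2 by simp
    also have "x1^2 + x2^2 = H * (ti^2 + tj^2)" unfolding x1sq x2sq by (simp add: algebra_simps)
    also have "2 * (H * (ti^2 + tj^2)) \<le> 2 * (H * K)" using K H by (intro mult_left_mono) auto
    also have "\<dots> < e^2" using H H0 e(1) by simp
    finally have "sqrt (\<Sum>k\<in>UNIV. (cmod (w$k - z$k))^2) < sqrt (e^2)" by (intro real_sqrt_less_mono)
    then show ?thesis unfolding dist_vec_eq using e(1) by simp
  qed
  have "fobj a \<beta> z \<le> fobj a \<beta> w" using e(2) wsph wdist by blast
  with flt show False by simp
qed


lemma real_of_Reals: "x \<in> \<real> \<Longrightarrow> complex_of_real (Re x) = x"
  by (simp add: complex_eq_iff complex_is_Real_iff)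

lemma profile:
  fixes a z :: "complex^'n"
  assumes b: "\<beta> > 0" and lm: "local_min_on_sphere a \<beta> z" and cs: "consistent a \<beta> z"
    and ci: "inner_aH a z = complex_of_real c" and c: "c > 0"
  shows "\<exists>k0 m s. prof (\<lambda>k. cmod (a$k)) \<beta> k0 (\<lambda>k. cmod (z$k)) m s"
proof -
  define r where "r k = cmod (a$k)" for k
  define P where "P k = cmod (z$k)" for k
  define \<tau> where "\<tau> k = Re (cnj (a$k) * z$k)" for k
  have st: "stationary a \<beta> z" and cons: "\<And>k. (a$k \<noteq> 0 \<longrightarrow> cnj (a$k) * z$k \<in> \<real>) \<and> (a$k = 0 \<longrightarrow> z$k \<in> \<real>)"
    using cs unfolding consistent_def by auto
  have zs: "z \<in> csphere" using lm unfolding local_min_on_sphere_def by auto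
  have treal: "cnj (a$k) * z$k = complex_of_real (\<tau> k)" for k
  proof (cases "a$k = 0")
    case True then show ?thesis unfolding \<tau>_def by simp
  next
    case False then show ?thesis using cons[of k] unfolding \<tau>_def by (intro real_of_Reals[symmetric]) simp
  qed
  have tabs: "\<bar>\<tau> k\<bar> = r k * P k" for k
  proof -
    have "\<bar>\<tau> k\<bar> = cmod (complex_of_real (\<tau> k))" by simp
    also have "\<dots> = cmod (cnj (a$k) * z$k)" using treal[of k] by simp
    also have "\<dots> = r k * P k" unfolding r_def P_def by (simp add: norm_mult)
    finally show ?thesis .
  qed
  have csum: "c = (\<Sum>k\<in>UNIV. \<tau> k)"
  proof -
    have "complex_of_real c = (\<Sum>k\<in>UNIV. complex_of_real (\<tau> k))" using ci unfolding inner_aH_def by (simp add: treal)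
    then show ?thesis by (simp flip: of_real_sum)
  qed
  define N where "N = norm4_4 z"
  define L where "L = c^2 + 2*\<beta>*N"
  have steq: "complex_of_real c * a$k + complex_of_real (2*\<beta>*(P k)^2) * z$k = complex_of_real L * z$k" for k
  proof -
    have "inner_aH a z * a $ k + 2 * complex_of_real \<beta> * complex_of_real ((cmod (z $ k))^2) * z $ k
          = complex_of_real ((cmod (inner_aH a z))^2 + 2 * \<beta> * norm4_4 z) * z $ k"
      using st unfolding stationary_def by blast
    then show ?thesis unfolding ci L_def N_def P_def by simp
  qed
  have nz: "z$k \<noteq> 0" for k
  proof
    assume z0: "z$k = 0"
    then have "complex_of_real c * a$k = 0" using steq[of k] by simp
    then have "a$k = 0" using c by simp
    moreover have "inner_aH a z \<noteq> 0" using ci c by simp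
    ultimately show False using no_zero_coord[OF b lm _ z0] by blast
  qed
  have Pp: "P k > 0" for k unfolding P_def using nz by simp
  obtain k0 where k0: "\<tau> k0 > 0"
  proof (rule ccontr)
    assume "\<not> thesis"
    then have "\<forall>k. \<tau> k \<le> 0" using that by (meson not_le)
    then have "(\<Sum>k\<in>UNIV. \<tau> k) \<le> 0" by (simp add: sum_nonpos)
    then show False using csum c by simp
  qed
  have tneg: "\<tau> k \<le> 0" if "k \<noteq> k0" for k
  proof (rule ccontr)
    assume "\<not> \<tau> k \<le> 0"
    then show False using two_pos[OF b lm ci c treal[of k0] treal[of k] k0 _ that[symmetric]] by simp
  qed
  have tsg: "\<tau> k = sg k0 k * r k * P k" for k
  proof (cases "k = k0")
    case True then show ?thesis using tabs[of k] k0 by (simp add: sg_def)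
  next
    case False then show ?thesis using tabs[of k] tneg[OF False] by (simp add: sg_def)
  qed
  have rnn: "r k \<ge> 0" for k unfolding r_def by simp
  have r0: "r k0 > 0"
  proof -
    have "r k0 \<noteq> 0" using tsg[of k0] k0 by auto
    then show ?thesis using rnn[of k0] by simp
  qed
  define m where "m = L / (2*\<beta>)"
  define s where "s = c / (2*\<beta>)"
  have s: "s > 0" unfolding s_def using b c by simp
  have key: "s * sg k0 k * r k = P k * (m - (P k)^2)" for k
  proof (cases "a$k = 0")
    case True
    then have rk: "r k = 0" unfolding r_def by simp
    have "complex_of_real (2*\<beta>*(P k)^2) * z$k = complex_of_real L * z$k" using steq[of k] True by simp
    then have "complex_of_real (2*\<beta>*(P k)^2) = complex_of_real L" using nz[of k] by (meson mult_cancel_right)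
    then have "2*\<beta>*(P k)^2 = L" by (simp only: of_real_eq_iff)
    then have "(P k)^2 = m" unfolding m_def using b by (simp add: field_simps)
    then show ?thesis using rk by simp
  next
    case False
    then have rp: "r k > 0" unfolding r_def by simp
    have "cnj (a$k) * (complex_of_real c * a$k + complex_of_real (2*\<beta>*(P k)^2) * z$k) = cnj (a$k) * (complex_of_real L * z$k)"
      using steq[of k] by simp
    then have "complex_of_real c * (a$k * cnj (a$k)) + complex_of_real (2*\<beta>*(P k)^2) * (cnj (a$k) * z$k) = complex_of_real L * (cnj (a$k) * z$k)"
      by (simp add: algebra_simps)
    then have "complex_of_real c * complex_of_real ((r k)^2) + complex_of_real (2*\<beta>*(P k)^2) * complex_of_real (\<tau> k) = complex_of_real L * complex_of_real (\<tau> k)"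
      unfolding treal r_def complex_norm_square[symmetric] .
    then have eqR: "c * (r k)^2 + 2*\<beta>*(P k)^2 * \<tau> k = L * \<tau> k"
      by (simp only: of_real_mult[symmetric] of_real_add[symmetric] of_real_eq_iff)
    have sg2: "sg k0 k * sg k0 k = 1" by (simp add: sg_def)
    have "r k * (c * r k + 2*\<beta>*(P k)^2 * sg k0 k * P k) = r k * (L * sg k0 k * P k)"
      using eqR unfolding tsg by (simp add: algebra_simps power2_eq_square)
    then have "c * r k + 2*\<beta>*(P k)^2 * sg k0 k * P k = L * sg k0 k * P k" using rp by simp
    then have "sg k0 k * (c * r k + 2*\<beta>*(P k)^2 * sg k0 k * P k) = sg k0 k * (L * sg k0 k * P k)" by simp
    then have "sg k0 k * c * r k + 2*\<beta>*(P k)^2 * P k * (sg k0 k * sg k0 k) = L * P k * (sg k0 k * sg k0 k)"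
      by (simp add: algebra_simps)
    then have "sg k0 k * c * r k = P k * (L - 2*\<beta>*(P k)^2)" unfolding sg2 by (simp add: algebra_simps)
    then show ?thesis unfolding s_def m_def using b by (simp add: field_simps)
  qed
  have sum1: "(\<Sum>k\<in>UNIV. sg k0 k * r k * P k) = 2 * \<beta> * s"
    using csum b unfolding s_def by (simp flip: tsg)
  have sum2: "(\<Sum>k\<in>UNIV. (P k)^2) = 1" using zs unfolding csphere_def P_def by simp
  have "prof r \<beta> k0 P m s"
    unfolding prof_def using s r0 rnn Pp key sum1 sum2 by blast
  then show ?thesis unfolding r_def P_def by blast
qed

lemma neg_lemmas:
  fixes a z :: "complex^'n"
  assumes "local_min_on_sphere a \<beta> z" "consistent a \<beta> z"
  shows "local_min_on_sphere a \<beta> (-z)" "consistent a \<beta> (-z)" "inner_aH a (-z) = - inner_aH a z"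
proof -
  have inn: "inner_aH a (-w) = - inner_aH a w" for w :: "complex^'n"
    unfolding inner_aH_def by (simp add: sum_negf)
  then show "inner_aH a (-z) = - inner_aH a z" .
  have n4: "norm4_4 (-w) = norm4_4 w" for w :: "complex^'n" unfolding norm4_4_def by simp
  have sph: "(-w) \<in> csphere \<longleftrightarrow> w \<in> csphere" for w :: "complex^'n" unfolding csphere_def by simp
  have fo: "fobj a \<beta> (-w) = fobj a \<beta> w" for w unfolding fobj_def by (simp add: inn n4)
  obtain e where e: "e>0" "\<forall>w\<in>csphere. dist w z < e \<longrightarrow> fobj a \<beta> z \<le> fobj a \<beta> w"
    and zs: "z \<in> csphere" using assms(1) unfolding local_min_on_sphere_def by blast
  show "local_min_on_sphere a \<beta> (-z)"
    unfolding local_min_on_sphere_def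
  proof (intro conjI exI[of _ e] ballI impI)
    show "-z \<in> csphere" using zs sph by simp
    show "e > 0" by (rule e(1))
    fix w assume w: "w \<in> csphere" "dist w (-z) < e"
    have "dist (-w) z = dist w (-z)" by (simp add: dist_norm norm_minus_commute add.commute)
    then have "fobj a \<beta> z \<le> fobj a \<beta> (-w)" using e(2) w sph by simp
    then show "fobj a \<beta> (-z) \<le> fobj a \<beta> w" by (simp add: fo)
  qed
  have st: "stationary a \<beta> z" using assms(2) unfolding consistent_def by blast
  have "stationary a \<beta> (-z)"
    unfolding stationary_def
  proof (intro conjI allI)
    show "-z \<in> csphere" using zs sph by simp
    fix k
    have "inner_aH a z * a $ k + 2 * complex_of_real \<beta> * complex_of_real ((cmod (z $ k))^2) * z $ k
          = complex_of_real ((cmod (inner_aH a z))^2 + 2 * \<beta> * norm4_4 z) * z $ k"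
      using st unfolding stationary_def by blast
    then have "-(inner_aH a z * a $ k + 2 * complex_of_real \<beta> * complex_of_real ((cmod (z $ k))^2) * z $ k)
          = -(complex_of_real ((cmod (inner_aH a z))^2 + 2 * \<beta> * norm4_4 z) * z $ k)" by simp
    then show "inner_aH a (-z) * a $ k + 2 * complex_of_real \<beta> * complex_of_real ((cmod ((-z) $ k))^2) * (-z) $ k
          = complex_of_real ((cmod (inner_aH a (-z)))^2 + 2 * \<beta> * norm4_4 (-z)) * (-z) $ k"
      by (simp add: inn n4 algebra_simps)
  qed
  moreover have "\<forall>k. (a $ k \<noteq> 0 \<longrightarrow> cnj (a $ k) * (-z) $ k \<in> \<real>) \<and> (a $ k = 0 \<longrightarrow> (-z) $ k \<in> \<real>)"
    using assms(2) unfolding consistent_def by (simp add: Reals_minus_iff)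
  ultimately show "consistent a \<beta> (-z)" unfolding consistent_def by blast
qed

lemma profile2:
  fixes a z :: "complex^'n"
  assumes b: "\<beta> > 0" and lm: "local_min_on_sphere a \<beta> z" and cs: "consistent a \<beta> z"
    and nz: "inner_aH a z \<noteq> 0"
  shows "\<exists>k0 m s. prof (\<lambda>k. cmod (a$k)) \<beta> k0 (\<lambda>k. cmod (z$k)) m s"
proof -
  have cons: "\<And>k. (a$k \<noteq> 0 \<longrightarrow> cnj (a$k) * z$k \<in> \<real>)" using cs unfolding consistent_def by auto
  have "inner_aH a z \<in> \<real>" unfolding inner_aH_def
  proof (rule sum_in_Reals)
    fix k assume "k \<in> (UNIV::'n set)"
    show "cnj (a$k) * z$k \<in> \<real>" using cons[of k] by (cases "a$k = 0") auto
  qed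
  then have ci: "inner_aH a z = complex_of_real (Re (inner_aH a z))" by (simp add: real_of_Reals)
  have "Re (inner_aH a z) \<noteq> 0" using nz ci by (metis of_real_0)
  then consider "Re (inner_aH a z) > 0" | "Re (inner_aH a z) < 0" by linarith
  then show ?thesis
  proof cases
    case 1 then show ?thesis using profile[OF b lm cs ci] by blast
  next
    case 2
    note ng = neg_lemmas[OF lm cs]
    have ci2: "inner_aH a (-z) = complex_of_real (- Re (inner_aH a z))" using ng(3) ci by (metis of_real_minus)
    have "\<exists>k0 m s. prof (\<lambda>k. cmod (a$k)) \<beta> k0 (\<lambda>k. cmod ((-z)$k)) m s"
      using profile[OF b ng(1) ng(2) ci2] 2 by simp
    then show ?thesis by simp
  qed
qed

theorem theorem10:
  fixes a z y :: "complex ^ 'n" and \<beta> :: real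
  assumes "\<beta> > 0"
    and "local_min_on_sphere a \<beta> z" and "consistent a \<beta> z" and "inner_aH a z \<noteq> 0"
    and "local_min_on_sphere a \<beta> y" and "consistent a \<beta> y" and "inner_aH a y \<noteq> 0"
  shows "\<forall>k. cmod (y $ k) = cmod (z $ k)"
proof
  fix k
  obtain k0 m s where pz: "prof (\<lambda>k. cmod (a$k)) \<beta> k0 (\<lambda>k. cmod (z$k)) m s"
    using profile2[OF assms(1-4)] by blast
  obtain k1 m' s' where py: "prof (\<lambda>k. cmod (a$k)) \<beta> k1 (\<lambda>k. cmod (y$k)) m' s'"
    using profile2[OF assms(1) assms(5-7)] by blast
  show "cmod (y $ k) = cmod (z $ k)" using prof_unique[OF py pz assms(1)] by simp
qed

end
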